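(* Let $\mathcal W$ be a finite set of arms, $(Y_t(w))_{w\in\mathcal W}$, $t=1,2,\dots$, i.i.d. vectors of potential outcomes with nonzero variance and finite $(2+\delta)$-th moments for some $\delta>0$, $W_t$ assigned with known strictly positive probabilities $e_t(w)=\mathbb P[W_t=w\mid H^{t-1}]$ (the conditional law of $W_t$ given $H^{t-1}$ and current and future potential outcomes depending only on $H^{t-1}$), $Y_t=Y_t(W_t)$, $H^{t-1}=\{(W_s,Y_s)\}_{s<t}$. Fix $w$ and suppose $e_t(w)\ge Ct^{-\alpha}$ for all $t$, for some $\alpha\in[0,1)$ and $C>0$. For each horizon $T$, let $\lambda_t(w)$, $t=1,\dots,T$, be $H^{t-1}$-measurable allocation rates with $\lambda_t(w)<1$ for $t<T$, $\lambda_T(w)=1$, and, for a finite positive constant $C'$, $$\frac{1}{T-t+1}\le\lambda_t(w)\le C'\,\frac{e_t(w)}{t^{-\alpha}+T^{1-\alpha}-t^{1-\alpha}}.$$ Define nonnegative weights $h_t(w)$ recursively by $$\frac{h_t^2(w)}{e_t(w)}=\Big(1-\sum_{s=1}^{t-1}\frac{h_s^2(w)}{e_s(w)}\Big)\lambda_t(w).$$ Then the $h_t(w)$ are $H^{t-1}$-measurable and satisfy: (i) $\big(\sum_{t=1}^T h_t(w)\big)^2\big/\mathbb E\big[\sum_{t=1}^T h_t^2(w)/e_t(w)\big]\to\infty$ in probability; (ii) for some $p>1$, $\sum_{t=1}^T \frac{h_t^2(w)}{e_t(w)}\big/\mathbb E\big[\sum_{t=1}^T\frac{h_t^2(w)}{e_t(w)}\big]\to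 1$ in $L_p$; (iii) for some $\delta>0$, $\sum_{t=1}^T \frac{h_t^{2+\delta}(w)}{e_t^{1+\delta}(w)}\big/\mathbb E\big[\sum_{t=1}^T\frac{h_t^2(w)}{e_t(w)}\big]^{1+\delta/2}\to 0$ in probability; all as $T\to\infty$.
   Context: $H^{t-1}$-measurable means a function of the observed arms and outcomes up to time $t-1$. The weights and allocation rates depend on the horizon $T$. *)

theory Defs
  imports "HOL-Probability.Probability"
begin

definition hist_gen :: "'a measure \<Rightarrow> (nat \<Rightarrow> 'a \<Rightarrow> 'w) \<Rightarrow> (nat \<Rightarrow> 'a \<Rightarrow> 'w \<Rightarrow> real) \<Rightarrow> nat \<Rightarrow> 'a set set" where
  "hist_gen M W Y t =
     (\<Union>s\<in>{1..<t}. {W s -` {a} \<inter> space M | a. True}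
                  \<union> {(\<lambda>\<omega>. Y s \<omega> (W s \<omega>)) -` A \<inter> space M | A. A \<in> sets borel})"

text \<open>H^{t-1} = sigma((W_s, Y_s) : s < t).\<close>
definition Hprev :: "'a measure \<Rightarrow> (nat \<Rightarrow> 'a \<Rightarrow> 'w) \<Rightarrow> (nat \<Rightarrow> 'a \<Rightarrow> 'w \<Rightarrow> real) \<Rightarrow> nat \<Rightarrow> 'a measure" where
  "Hprev M W Y t = sigma (space M) (hist_gen M W Y t)"

text \<open>H^{t-1} enlarged by current and future potential outcomes Y_s(v), s >= t.\<close>
definition Henl :: "'a measure \<Rightarrow> (nat \<Rightarrow> 'a \<Rightarrow> 'w) \<Rightarrow> (nat \<Rightarrow> 'a \<Rightarrow> 'w \<Rightarrow> real) \<Rightarrow> nat \<Rightarrow> 'a measure" where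
  "Henl M W Y t = sigma (space M)
     (hist_gen M W Y t \<union> (\<Union>s\<in>{t..}. \<Union>v. {(\<lambda>\<omega>. Y s \<omega> v) -` A \<inter> space M | A. A \<in> sets borel}))"

end

theory Submission imports Defs  begin

lemma conc:
  fixes t T a :: real
  assumes "0 < t" "t \<le> T" "0 \<le> a" "a < 1"
  shows "(1-a) * T powr (-a) * (T - t) \<le> T powr (1-a) - t powr (1-a)"
proof -
  have T0: "T > 0" using assms by linarith
  have Y: "t powr (1-a) * T powr a \<le> (1-a)*t + a*T"
    using Youngs_inequality_0[of "1-a" a t T] assms T0 by simp
  have "t powr (1-a) = (t powr (1-a) * T powr a) * T powr (-a)"
    using T0 by (simp add: powr_minus field_simps)
  also have "\<dots> \<le> ((1-a)*t + a*T) * T powr (-a)"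
    using Y by (intro mult_right_mono) auto
  finally have 1: "t powr (1-a) \<le> ((1-a)*t + a*T) * T powr (-a)" .
  have 2: "T powr (1-a) = T * T powr (-a)"
    using T0 by (simp add: powr_diff powr_minus field_simps)
  show ?thesis using 1 2 by (simp add: algebra_simps)
qed

lemma Dlow:
  fixes a :: real and t T :: nat
  assumes "1 \<le> t" "t \<le> T" "0 \<le> a" "a < 1"
  shows "(1-a) * real T powr (-a) * (real T - real t + 1)
     \<le> real t powr (-a) + real T powr (1-a) - real t powr (1-a)"
proof -
  have c: "(1-a) * real T powr (-a) * (real T - real t) \<le> real T powr (1-a) - real t powr (1-a)"
    using conc[of "real t" "real T" a] assms by simp
  have "real T powr (-a) \<le> real t powr (-a)"
    using assms by (intro powr_mono2') auto
  moreover have "(1-a) * real T powr (-a) \<le> real T powr (-a)"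
    using assms by (simp add: mult_le_cancel_right1)
  ultimately show ?thesis using c by (simp add: algebra_simps)
qed

lemma recur:
  fixes q lam :: "nat \<Rightarrow> real" and T :: nat
  assumes T: "T \<ge> 1"
    and lb: "\<forall>t\<in>{1..T}. 1 / (real T - real t + 1) \<le> lam t \<and> lam t \<le> 1"
    and lT: "lam T = 1"
    and q: "\<forall>t\<in>{1..T}. q t = (1 - sum q {1..<t}) * lam t"
  shows "\<forall>t\<in>{1..T}. 0 \<le> 1 - sum q {1..<t} \<and> 1 - sum q {1..<t} \<le> (real T - real t + 1) / T"
    and "sum q {1..T} = 1"
proof -
  have main: "n \<le> T \<Longrightarrow> 0 \<le> 1 - sum q {1..<Suc n} \<and> 1 - sum q {1..<Suc n} \<le> (real T - real n) / T" for n
  proof (induction n)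
    case 0
    then show ?case using T by simp
  next
    case (Suc n)
    let ?R = "1 - sum q {1..<Suc n}"
    have IH: "0 \<le> ?R" "?R \<le> (real T - real n) / T" using Suc by auto
    have l: "1 / (real T - real n) \<le> lam (Suc n)" "lam (Suc n) \<le> 1"
    proof -
      have "1 / (real T - real (Suc n) + 1) \<le> lam (Suc n) \<and> lam (Suc n) \<le> 1"
        using bspec[OF lb, of "Suc n"] Suc.prems by simp
      moreover have "real T - real (Suc n) + 1 = real T - real n" by simp
      ultimately show "1 / (real T - real n) \<le> lam (Suc n)" "lam (Suc n) \<le> 1" by auto
    qed
    have eq: "1 - sum q {1..<Suc (Suc n)} = ?R * (1 - lam (Suc n))"
    proof -
      have "q (Suc n) = ?R * lam (Suc n)" using bspec[OF q, of "Suc n"] Suc.prems by simp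
      moreover have "sum q {1..<Suc (Suc n)} = sum q {1..<Suc n} + q (Suc n)" by simp
      ultimately show ?thesis by (simp add: algebra_simps)
    qed
    have Tn: "real T - real n \<ge> 1" using Suc.prems by simp
    have "?R * (1 - lam (Suc n)) \<le> ((real T - real n) / T) * (1 - 1 / (real T - real n))"
      using IH l by (intro mult_mono) auto
    also have "\<dots> = (real T - real (Suc n)) / T" using Tn by (simp add: field_simps)
    finally show ?case using eq IH l by simp
  qed
  show "\<forall>t\<in>{1..T}. 0 \<le> 1 - sum q {1..<t} \<and> 1 - sum q {1..<t} \<le> (real T - real t + 1) / T"
  proof
    fix t assume "t \<in> {1..T}"
    then obtain n where n: "t = Suc n" "n \<le> T" by (cases t) auto
    show "0 \<le> 1 - sum q {1..<t} \<and> 1 - sum q {1..<t} \<le> (real T - real t + 1) / T"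
      using main[OF n(2)] n by simp
  qed
  have "sum q {1..T} = sum q {1..<T} + q T" using T
    by (metis Suc_le_D atLeastLessThanSuc_atLeastAtMost sum.atLeastLessThan_Suc le_SucI)
  then show "sum q {1..T} = 1" using q T lT by simp
qed
theorem theorem2:
  fixes M :: "'a measure"
    and W :: "nat \<Rightarrow> 'a \<Rightarrow> 'w::finite"
    and Y :: "nat \<Rightarrow> 'a \<Rightarrow> 'w \<Rightarrow> real"
    and e :: "nat \<Rightarrow> 'w \<Rightarrow> 'a \<Rightarrow> real"
    and w :: 'w
    and \<delta> \<alpha> C C' :: real
    and lam h :: "nat \<Rightarrow> nat \<Rightarrow> 'a \<Rightarrow> real"
  assumes M: "prob_space M"
    and W_meas: "\<forall>t\<ge>1. W t \<in> measurable M (count_space UNIV)"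
    and Y_meas: "\<forall>t\<ge>1. Y t \<in> measurable M (Pi\<^sub>M UNIV (\<lambda>_. borel))"
    and Y_indep: "prob_space.indep_vars M (\<lambda>_. Pi\<^sub>M UNIV (\<lambda>_. borel)) Y {1..}"
    and Y_ident: "\<forall>t\<ge>1. distr M (Pi\<^sub>M UNIV (\<lambda>_. borel)) (Y t) = distr M (Pi\<^sub>M UNIV (\<lambda>_. borel)) (Y 1)"
    and \<delta>_pos: "\<delta> > 0"
    and Y_moment: "\<forall>v. integrable M (\<lambda>\<omega>. \<bar>Y 1 \<omega> v\<bar> powr (2 + \<delta>))"
    and Y_var: "\<forall>v. (\<integral>\<omega>. (Y 1 \<omega> v - (\<integral>\<xi>. Y 1 \<xi> v \<partial>M))\<^sup>2 \<partial>M) \<noteq> 0"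
    and e_pos: "\<forall>t\<ge>1. \<forall>v. \<forall>\<omega>\<in>space M. e t v \<omega> > 0"
    and e_meas: "\<forall>t\<ge>1. \<forall>v. e t v \<in> borel_measurable (Hprev M W Y t)"
    and e_cond: "\<forall>t\<ge>1. \<forall>v. \<forall>A\<in>sets (Henl M W Y t).
                   measure M (A \<inter> {\<omega>\<in>space M. W t \<omega> = v}) = (LINT \<omega>:A|M. e t v \<omega>)"
    and \<alpha>: "0 \<le> \<alpha>" "\<alpha> < 1"
    and C: "C > 0"
    and e_lower: "\<forall>t\<ge>1. \<forall>\<omega>\<in>space M. e t w \<omega> \<ge> C * real t powr (-\<alpha>)"
    and C': "C' > 0"
    and lam_meas: "\<forall>T\<ge>1. \<forall>t\<in>{1..T}. lam T t \<in> borel_measurable (Hprev M W Y t)"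
    and lam_lt1: "\<forall>T\<ge>1. \<forall>t\<in>{1..<T}. \<forall>\<omega>\<in>space M. lam T t \<omega> < 1"
    and lam_T: "\<forall>T\<ge>1. \<forall>\<omega>\<in>space M. lam T T \<omega> = 1"
    and lam_bounds: "\<forall>T\<ge>1. \<forall>t\<in>{1..T}. \<forall>\<omega>\<in>space M.
                       1 / (real T - real t + 1) \<le> lam T t \<omega> \<and>
                       lam T t \<omega> \<le> C' * e t w \<omega> /
                         (real t powr (-\<alpha>) + real T powr (1 - \<alpha>) - real t powr (1 - \<alpha>))"
    and h_def: "\<forall>T\<ge>1. \<forall>t\<in>{1..T}. \<forall>\<omega>\<in>space M. h T t \<omega> \<ge> 0 \<and>
                  (h T t \<omega>)\<^sup>2 / e t w \<omega> =
                    (1 - (\<Sum>s=1..<t. (h T s \<omega>)\<^sup>2 / e s w \<omega>)) * lam T t \<omega>"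
  shows "(\<forall>T\<ge>1. \<forall>t\<in>{1..T}. h T t \<in> borel_measurable (Hprev M W Y t))
    \<and> (\<forall>K::real. (\<lambda>T. measure M {\<omega>\<in>space M.
          (\<Sum>t=1..T. h T t \<omega>)\<^sup>2 / (\<integral>\<xi>. (\<Sum>t=1..T. (h T t \<xi>)\<^sup>2 / e t w \<xi>) \<partial>M) \<le> K})
        \<longlonglongrightarrow> 0)
    \<and> (\<exists>p>1. (\<forall>\<^sub>F T in sequentially. integrable M (\<lambda>\<omega>.
          \<bar>(\<Sum>t=1..T. (h T t \<omega>)\<^sup>2 / e t w \<omega>) / (\<integral>\<xi>. (\<Sum>t=1..T. (h T t \<xi>)\<^sup>2 / e t w \<xi>) \<partial>M) - 1\<bar> powr p))
        \<and> (\<lambda>T. \<integral>\<omega>.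
          \<bar>(\<Sum>t=1..T. (h T t \<omega>)\<^sup>2 / e t w \<omega>) / (\<integral>\<xi>. (\<Sum>t=1..T. (h T t \<xi>)\<^sup>2 / e t w \<xi>) \<partial>M) - 1\<bar> powr p \<partial>M)
        \<longlonglongrightarrow> 0)
    \<and> (\<exists>\<delta>'>0. \<forall>\<epsilon>>0. (\<lambda>T. measure M {\<omega>\<in>space M.
          \<bar>(\<Sum>t=1..T. h T t \<omega> powr (2 + \<delta>') / e t w \<omega> powr (1 + \<delta>'))
            / (\<integral>\<xi>. (\<Sum>t=1..T. (h T t \<xi>)\<^sup>2 / e t w \<xi>) \<partial>M) powr (1 + \<delta>' / 2)\<bar> > \<epsilon>})
        \<longlonglongrightarrow> 0)"
proof -
  interpret P: prob_space M by (rule M)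
  define m where "m T = C' / ((1-\<alpha>) * real T powr (1-\<alpha>))" for T :: nat
  have mpos: "m T > 0" if "T \<ge> 1" for T
    using that C' \<alpha> unfolding m_def by (intro divide_pos_pos mult_pos_pos) auto
  have ptw: "(\<Sum>t=1..T. (h T t \<omega>)\<^sup>2 / e t w \<omega>) = 1 \<and>
      (\<forall>t\<in>{1..T}. 0 \<le> (h T t \<omega>)\<^sup>2 / e t w \<omega> \<and> (h T t \<omega>)\<^sup>2 / e t w \<omega> \<le> m T * e t w \<omega>)"
    if T: "T \<ge> 1" and \<omega>: "\<omega> \<in> space M" for T \<omega>
  proof -
    define q where "q t = (h T t \<omega>)\<^sup>2 / e t w \<omega>" for t
    define l where "l t = lam T t \<omega>" for t
    have lb: "\<forall>t\<in>{1..T}. 1 / (real T - real t + 1) \<le> l t \<and> l t \<le> 1"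
    proof
      fix t assume t: "t \<in> {1..T}"
      have "l t \<le> 1"
      proof (cases "t = T")
        case True then show ?thesis using lam_T T \<omega> unfolding l_def by simp
      next
        case False then have "t \<in> {1..<T}" using t by auto
        then show ?thesis using lam_lt1[rule_format, OF T _ \<omega>] unfolding l_def by fastforce
      qed
      then show "1 / (real T - real t + 1) \<le> l t \<and> l t \<le> 1"
        using lam_bounds[rule_format, OF T t \<omega>] unfolding l_def by simp
    qed
    have lT: "l T = 1" using lam_T T \<omega> unfolding l_def by simp
    have qq: "\<forall>t\<in>{1..T}. q t = (1 - sum q {1..<t}) * l t"
    proof
      fix t assume t: "t \<in> {1..T}"
      show "q t = (1 - sum q {1..<t}) * l t"
        using h_def[rule_format, OF T t \<omega>] unfolding q_def l_def by simp
    qed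
    note R = recur[OF T lb lT qq]
    have "0 \<le> q t \<and> q t \<le> m T * e t w \<omega>" if t: "t \<in> {1..T}" for t
    proof -
      have e0: "e t w \<omega> > 0" using e_pos t \<omega> by auto
      define D where "D = real t powr (-\<alpha>) + real T powr (1-\<alpha>) - real t powr (1-\<alpha>)"
      define k where "k = real T - real t + 1"
      have k1: "k \<ge> 1" using t unfolding k_def by auto
      have TA: "real T powr (-\<alpha>) > 0" using T by simp
      have Dl: "(1-\<alpha>) * real T powr (-\<alpha>) * k \<le> D"
        using Dlow[of t T \<alpha>] t \<alpha> unfolding D_def k_def by auto
      have Dl0: "(1-\<alpha>) * real T powr (-\<alpha>) * k > 0" using \<alpha> TA k1 by simp
      have lu: "l t \<le> C' * e t w \<omega> / D"
        using lam_bounds[rule_format, OF T t \<omega>] unfolding l_def D_def by simp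
      have Rb: "0 \<le> 1 - sum q {1..<t}" "1 - sum q {1..<t} \<le> k / T"
        using R(1) t unfolding k_def by auto
      have q0: "0 \<le> q t" unfolding q_def using e0 by simp
      have "q t \<le> (k / T) * (C' * e t w \<omega> / D)"
      proof -
        have l0: "0 \<le> l t"
        proof -
          have "1 / (real T - real t + 1) \<le> l t" using lb t by blast
          moreover have "0 < 1 / (real T - real t + 1)" using k1 unfolding k_def by simp
          ultimately show ?thesis by linarith
        qed
        have "q t = (1 - sum q {1..<t}) * l t" using qq t by blast
        also have "\<dots> \<le> (k / T) * (C' * e t w \<omega> / D)"
          using Rb lu l0 k1 by (intro mult_mono) auto
        finally show ?thesis .
      qed
      also have "\<dots> \<le> (k / T) * (C' * e t w \<omega> / ((1-\<alpha>) * real T powr (-\<alpha>) * k))"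
        using Dl Dl0 k1 T C' e0
        by (intro mult_left_mono divide_left_mono) auto
      also have "\<dots> = m T * e t w \<omega>"
      proof -
        have "real T powr (1-\<alpha>) = real T * real T powr (-\<alpha>)"
          using T by (simp add: powr_diff powr_minus field_simps)
        then show ?thesis unfolding m_def using k1 T \<alpha> TA by (simp add: field_simps)
      qed
      finally show ?thesis using q0 by simp
    qed
    then show ?thesis using R(2) unfolding q_def by auto
  qed
  have I1: "(\<integral>\<xi>. (\<Sum>t=1..T. (h T t \<xi>)\<^sup>2 / e t w \<xi>) \<partial>M) = 1" if T: "T \<ge> 1" for T
  proof -
    have "(\<integral>\<xi>. (\<Sum>t=1..T. (h T t \<xi>)\<^sup>2 / e t w \<xi>) \<partial>M) = (\<integral>\<xi>. 1 \<partial>M)"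
      by (rule Bochner_Integration.integral_cong[OF refl]) (use ptw[OF T] in blast)
    then show ?thesis by (simp add: P.prob_space)
  qed
  have mlim: "m \<longlonglongrightarrow> 0"
  proof -
    have "(\<lambda>T. C' / (1-\<alpha>) * real T powr (\<alpha>-1)) \<longlonglongrightarrow> C' / (1-\<alpha>) * 0"
      using \<alpha> by (intro tendsto_mult tendsto_const tendsto_neg_powr filterlim_real_sequentially) auto
    moreover have "\<forall>\<^sub>F T in sequentially. C' / (1-\<alpha>) * real T powr (\<alpha>-1) = m T"
      unfolding m_def by (intro always_eventually allI) (simp add: powr_diff powr_minus field_simps)
    ultimately show ?thesis by (simp add: tendsto_cong)
  qed
  have mev: "\<forall>\<^sub>F T in sequentially. T \<ge> 1 \<and> m T < \<epsilon>" if "\<epsilon> > 0" for \<epsilon>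
    using order_tendstoD(2)[OF mlim that] eventually_ge_at_top[of "1::nat"] by eventually_elim auto
  have spc: "space (Hprev M W Y t) = space M" for t
    unfolding Hprev_def by (simp add: space_measure_of_conv)
  have mono: "borel_measurable (Hprev M W Y s) \<subseteq> borel_measurable (Hprev M W Y t)" if "s \<le> t" for s t
    unfolding Hprev_def using that
  proof (intro measurable_mono1)
    show "hist_gen M W Y t \<subseteq> Pow (space M)" by (auto simp: hist_gen_def)
    show "hist_gen M W Y s \<subseteq> hist_gen M W Y t"
      unfolding hist_gen_def using that by (intro SUP_subset_mono) auto
  qed
  have part1: "\<forall>T\<ge>1. \<forall>t\<in>{1..T}. h T t \<in> borel_measurable (Hprev M W Y t)"
  proof (intro allI impI)
    fix T :: nat assume T: "T \<ge> 1"
    have "t \<in> {1..T} \<longrightarrow> h T t \<in> borel_measurable (Hprev M W Y t)" for t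
    proof (induction t rule: less_induct)
      case (less t)
      show ?case
      proof
        assume t: "t \<in> {1..T}"
        have hs: "h T s \<in> borel_measurable (Hprev M W Y t)" if "s \<in> {1..<t}" for s
          using less.IH[of s] that t mono[of s t] by auto
        have es: "e s w \<in> borel_measurable (Hprev M W Y t)" if "s \<in> {1..t}" for s
          using e_meas that mono[of s t] by auto
        have lm: "lam T t \<in> borel_measurable (Hprev M W Y t)" using lam_meas T t by auto
        have g: "(\<lambda>\<omega>. sqrt (e t w \<omega> * ((1 - (\<Sum>s=1..<t. (h T s \<omega>)\<^sup>2 / e s w \<omega>)) * lam T t \<omega>)))
            \<in> borel_measurable (Hprev M W Y t)"
        proof (rule measurable_compose[OF _ borel_measurable_sqrt])
          have "(\<lambda>\<omega>. \<Sum>s=1..<t. (h T s \<omega>)\<^sup>2 / e s w \<omega>) \<in> borel_measurable (Hprev M W Y t)"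
          proof (rule borel_measurable_sum)
            fix s assume s: "s \<in> {1..<t}"
            show "(\<lambda>\<omega>. (h T s \<omega>)\<^sup>2 / e s w \<omega>) \<in> borel_measurable (Hprev M W Y t)"
              using hs[OF s] es[of s] s by (intro borel_measurable_divide borel_measurable_power) auto
          qed
          then show "(\<lambda>\<omega>. e t w \<omega> * ((1 - (\<Sum>s=1..<t. (h T s \<omega>)\<^sup>2 / e s w \<omega>)) * lam T t \<omega>))
            \<in> borel_measurable (Hprev M W Y t)"
            using es[of t] lm t by (intro borel_measurable_times borel_measurable_diff borel_measurable_const) auto
        qed
        show "h T t \<in> borel_measurable (Hprev M W Y t)"
        proof (rule measurable_cong[THEN iffD1, OF _ g])
          fix \<omega> assume "\<omega> \<in> space (Hprev M W Y t)"
          then have \<omega>: "\<omega> \<in> space M" by (simp add: spc)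
          have e0: "e t w \<omega> > 0" using e_pos t \<omega> by auto
          have hd: "h T t \<omega> \<ge> 0 \<and> (h T t \<omega>)\<^sup>2 / e t w \<omega> =
                    (1 - (\<Sum>s=1..<t. (h T s \<omega>)\<^sup>2 / e s w \<omega>)) * lam T t \<omega>"
            using h_def T t \<omega> by blast
          then have "(h T t \<omega>)\<^sup>2 = e t w \<omega> * ((1 - (\<Sum>s=1..<t. (h T s \<omega>)\<^sup>2 / e s w \<omega>)) * lam T t \<omega>)"
            using e0 by (simp add: field_simps)
          then show "sqrt (e t w \<omega> * ((1 - (\<Sum>s=1..<t. (h T s \<omega>)\<^sup>2 / e s w \<omega>)) * lam T t \<omega>)) = h T t \<omega>"
            using hd by (metis real_sqrt_abs abs_of_nonneg)
        qed
      qed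
    qed
    then show "\<forall>t\<in>{1..T}. h T t \<in> borel_measurable (Hprev M W Y t)" by blast
  qed
  have low: "1 / m T \<le> (\<Sum>t=1..T. h T t \<omega>)\<^sup>2" if T: "T \<ge> 1" and \<omega>: "\<omega> \<in> space M" for T \<omega>
  proof -
    note pt = ptw[OF T \<omega>]
    have m0: "m T > 0" using mpos T .
    have hb: "(h T t \<omega>)\<^sup>2 / e t w \<omega> / sqrt (m T) \<le> h T t \<omega>" if t: "t \<in> {1..T}" for t
    proof -
      define q where "q = (h T t \<omega>)\<^sup>2 / e t w \<omega>"
      have e0: "e t w \<omega> > 0" using e_pos t \<omega> by auto
      have h0: "h T t \<omega> \<ge> 0" using h_def T t \<omega> by blast
      have q: "0 \<le> q" "q \<le> m T * e t w \<omega>" using pt t unfolding q_def by auto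
      have hq: "(h T t \<omega>)\<^sup>2 = q * e t w \<omega>" unfolding q_def using e0 by simp
      have "q * q \<le> q * (m T * e t w \<omega>)" using q by (intro mult_left_mono) auto
      have sq: "(q / sqrt (m T))\<^sup>2 = q * q / m T"
        using m0 by (simp add: power_divide power2_eq_square)
      have "q * q / m T \<le> q * (m T * e t w \<omega>) / m T"
        using \<open>q * q \<le> q * (m T * e t w \<omega>)\<close> m0 by (intro divide_right_mono) auto
      also have "\<dots> = (h T t \<omega>)\<^sup>2" using m0 hq by simp
      finally have "(q / sqrt (m T))\<^sup>2 \<le> (h T t \<omega>)\<^sup>2" using sq by simp
      then have "q / sqrt (m T) \<le> sqrt ((h T t \<omega>)\<^sup>2)" by (rule real_le_rsqrt)
      then have "q / sqrt (m T) \<le> h T t \<omega>" using h0 by simp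
      then show ?thesis unfolding q_def .
    qed
    have "1 / sqrt (m T) = (\<Sum>t=1..T. (h T t \<omega>)\<^sup>2 / e t w \<omega> / sqrt (m T))"
    proof -
      have "(\<Sum>t=1..T. (h T t \<omega>)\<^sup>2 / e t w \<omega> / sqrt (m T)) = (\<Sum>t=1..T. (h T t \<omega>)\<^sup>2 / e t w \<omega>) / sqrt (m T)"
        by (rule sum_divide_distrib[symmetric])
      then show ?thesis using conjunct1[OF pt] by simp
    qed
    also have "\<dots> \<le> (\<Sum>t=1..T. h T t \<omega>)" using hb by (intro sum_mono) auto
    finally have s: "1 / sqrt (m T) \<le> (\<Sum>t=1..T. h T t \<omega>)" .
    have "(1 / sqrt (m T))\<^sup>2 \<le> (\<Sum>t=1..T. h T t \<omega>)\<^sup>2"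
      using s m0 by (intro power_mono) auto
    then show ?thesis using m0 by (simp add: power_divide)
  qed
  have part2: "\<forall>K::real. (\<lambda>T. measure M {\<omega>\<in>space M.
          (\<Sum>t=1..T. h T t \<omega>)\<^sup>2 / (\<integral>\<xi>. (\<Sum>t=1..T. (h T t \<xi>)\<^sup>2 / e t w \<xi>) \<partial>M) \<le> K})
        \<longlonglongrightarrow> 0"
  proof
    fix K :: real
    define \<epsilon> where "\<epsilon> = (if K \<le> 0 then 1 else 1 / K)"
    have "\<epsilon> > 0" unfolding \<epsilon>_def by auto
    from mev[OF this] show "(\<lambda>T. measure M {\<omega>\<in>space M.
          (\<Sum>t=1..T. h T t \<omega>)\<^sup>2 / (\<integral>\<xi>. (\<Sum>t=1..T. (h T t \<xi>)\<^sup>2 / e t w \<xi>) \<partial>M) \<le> K})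
        \<longlonglongrightarrow> 0"
    proof (intro tendsto_eventually, eventually_elim)
      case (elim T)
      then have T: "T \<ge> 1" and mT: "m T < \<epsilon>" by auto
      have m0: "m T > 0" using mpos T .
      have "K < 1 / m T"
      proof (cases "K \<le> 0")
        case True then show ?thesis using m0 by (smt (verit) divide_pos_pos)
      next
        case False
        then have "m T < 1 / K" using mT unfolding \<epsilon>_def by simp
        then show ?thesis using False m0 by (simp add: field_simps)
      qed
      have "{\<omega>\<in>space M. (\<Sum>t=1..T. h T t \<omega>)\<^sup>2 /
          (\<integral>\<xi>. (\<Sum>t=1..T. (h T t \<xi>)\<^sup>2 / e t w \<xi>) \<partial>M) \<le> K} = {}"
      proof (rule equals0I)
        fix \<omega> assume a: "\<omega> \<in> {\<omega>\<in>space M. (\<Sum>t=1..T. h T t \<omega>)\<^sup>2 /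
          (\<integral>\<xi>. (\<Sum>t=1..T. (h T t \<xi>)\<^sup>2 / e t w \<xi>) \<partial>M) \<le> K}"
        then have \<omega>: "\<omega> \<in> space M" by simp
        from a I1[OF T] have "(\<Sum>t=1..T. h T t \<omega>)\<^sup>2 \<le> K" by simp
        moreover have "1 / m T \<le> (\<Sum>t=1..T. h T t \<omega>)\<^sup>2" by (rule low[OF T \<omega>])
        ultimately show False using \<open>K < 1 / m T\<close> by linarith
      qed
      then show ?case by (metis measure_empty)
    qed
  qed
  have part3: "\<exists>p>1. (\<forall>\<^sub>F T in sequentially. integrable M (\<lambda>\<omega>.
          \<bar>(\<Sum>t=1..T. (h T t \<omega>)\<^sup>2 / e t w \<omega>) / (\<integral>\<xi>. (\<Sum>t=1..T. (h T t \<xi>)\<^sup>2 / e t w \<xi>) \<partial>M) - 1\<bar> powr p))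
        \<and> (\<lambda>T. \<integral>\<omega>.
          \<bar>(\<Sum>t=1..T. (h T t \<omega>)\<^sup>2 / e t w \<omega>) / (\<integral>\<xi>. (\<Sum>t=1..T. (h T t \<xi>)\<^sup>2 / e t w \<xi>) \<partial>M) - 1\<bar> powr p \<partial>M)
        \<longlonglongrightarrow> 0"
  proof (intro exI[of _ 2] conjI)
    show "(1::real) < 2" by simp
    have z: "\<bar>(\<Sum>t=1..T. (h T t \<omega>)\<^sup>2 / e t w \<omega>) / (\<integral>\<xi>. (\<Sum>t=1..T. (h T t \<xi>)\<^sup>2 / e t w \<xi>) \<partial>M) - 1\<bar> powr 2 = 0"
      if "T \<ge> 1" "\<omega> \<in> space M" for T \<omega>
      using ptw[OF that] I1[OF that(1)] by simp
    show "\<forall>\<^sub>F T in sequentially. integrable M (\<lambda>\<omega>.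
          \<bar>(\<Sum>t=1..T. (h T t \<omega>)\<^sup>2 / e t w \<omega>) / (\<integral>\<xi>. (\<Sum>t=1..T. (h T t \<xi>)\<^sup>2 / e t w \<xi>) \<partial>M) - 1\<bar> powr 2)"
      using eventually_ge_at_top[of "1::nat"]
    proof eventually_elim
      case (elim T)
      have "integrable M (\<lambda>_. 0::real)" by simp
      moreover have "integrable M (\<lambda>\<omega>.
          \<bar>(\<Sum>t=1..T. (h T t \<omega>)\<^sup>2 / e t w \<omega>) / (\<integral>\<xi>. (\<Sum>t=1..T. (h T t \<xi>)\<^sup>2 / e t w \<xi>) \<partial>M) - 1\<bar> powr 2)
          \<longleftrightarrow> integrable M (\<lambda>_. 0::real)"
        by (rule Bochner_Integration.integrable_cong[OF refl]) (use z[OF \<open>1 \<le> T\<close>] in blast)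
      ultimately show ?case by simp
    qed
    show "(\<lambda>T. \<integral>\<omega>.
          \<bar>(\<Sum>t=1..T. (h T t \<omega>)\<^sup>2 / e t w \<omega>) / (\<integral>\<xi>. (\<Sum>t=1..T. (h T t \<xi>)\<^sup>2 / e t w \<xi>) \<partial>M) - 1\<bar> powr 2 \<partial>M)
        \<longlonglongrightarrow> 0"
      using eventually_ge_at_top[of "1::nat"]
    proof (intro tendsto_eventually, eventually_elim)
      case (elim T)
      have "(\<integral>\<omega>. \<bar>(\<Sum>t=1..T. (h T t \<omega>)\<^sup>2 / e t w \<omega>) / (\<integral>\<xi>. (\<Sum>t=1..T. (h T t \<xi>)\<^sup>2 / e t w \<xi>) \<partial>M) - 1\<bar> powr 2 \<partial>M)
         = (\<integral>\<omega>. 0 \<partial>M)"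
        by (rule Bochner_Integration.integral_cong[OF refl]) (use z[OF \<open>1 \<le> T\<close>] in blast)
      then show ?case by simp
    qed
  qed
  have part4: "\<exists>\<delta>'>0. \<forall>\<epsilon>>0. (\<lambda>T. measure M {\<omega>\<in>space M.
          \<bar>(\<Sum>t=1..T. h T t \<omega> powr (2 + \<delta>') / e t w \<omega> powr (1 + \<delta>'))
            / (\<integral>\<xi>. (\<Sum>t=1..T. (h T t \<xi>)\<^sup>2 / e t w \<xi>) \<partial>M) powr (1 + \<delta>' / 2)\<bar> > \<epsilon>})
        \<longlonglongrightarrow> 0"
  proof (intro exI[of _ 2] conjI allI impI)
    show "(0::real) < 2" by simp
    fix \<epsilon> :: real assume "\<epsilon> > 0"
    from mev[OF this] show "(\<lambda>T. measure M {\<omega>\<in>space M.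
          \<bar>(\<Sum>t=1..T. h T t \<omega> powr (2 + 2) / e t w \<omega> powr (1 + 2))
            / (\<integral>\<xi>. (\<Sum>t=1..T. (h T t \<xi>)\<^sup>2 / e t w \<xi>) \<partial>M) powr (1 + 2 / 2)\<bar> > \<epsilon>})
        \<longlonglongrightarrow> 0"
    proof (intro tendsto_eventually, eventually_elim)
      case (elim T)
      then have T: "T \<ge> 1" and mT: "m T < \<epsilon>" by auto
      have bnd: "\<bar>(\<Sum>t=1..T. h T t \<omega> powr (2 + 2) / e t w \<omega> powr (1 + 2))\<bar> \<le> m T"
        if \<omega>: "\<omega> \<in> space M" for \<omega>
      proof -
        note pt = ptw[OF T \<omega>]
        have tb: "0 \<le> h T t \<omega> powr (2 + 2) / e t w \<omega> powr (1 + 2) \<and>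
             h T t \<omega> powr (2 + 2) / e t w \<omega> powr (1 + 2) \<le> m T * ((h T t \<omega>)\<^sup>2 / e t w \<omega>)"
          if t: "t \<in> {1..T}" for t
        proof -
          define q where "q = (h T t \<omega>)\<^sup>2 / e t w \<omega>"
          have e0: "e t w \<omega> > 0" using e_pos t \<omega> by auto
          have h0: "h T t \<omega> \<ge> 0" using h_def T t \<omega> by blast
          have q: "0 \<le> q" "q \<le> m T * e t w \<omega>" using pt t unfolding q_def by auto
          have eq: "h T t \<omega> powr (2 + 2) / e t w \<omega> powr (1 + 2) = q * (q / e t w \<omega>)"
          proof -
            have "h T t \<omega> powr (2 + 2) = (h T t \<omega>) ^ 4" using h0 by simp
            moreover have "e t w \<omega> powr (1 + 2) = (e t w \<omega>) ^ 3" using e0 by simp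
            moreover have "(h T t \<omega>) ^ 4 / (e t w \<omega>) ^ 3 = q * (q / e t w \<omega>)"
              unfolding q_def using e0 by (simp add: power_divide power2_eq_square eval_nat_numeral)
            ultimately show ?thesis by simp
          qed
          have mle: "q / e t w \<omega> \<le> m T" using q e0 by (simp add: field_simps)
          have a: "q * (q / e t w \<omega>) \<le> m T * q"
            using mult_left_mono[OF mle q(1)] by (simp add: mult.commute)
          have b: "0 \<le> q * (q / e t w \<omega>)" using q e0 by simp
          show ?thesis
          proof
            show "0 \<le> h T t \<omega> powr (2 + 2) / e t w \<omega> powr (1 + 2)" unfolding eq by (rule b)
            show "h T t \<omega> powr (2 + 2) / e t w \<omega> powr (1 + 2) \<le> m T * ((h T t \<omega>)\<^sup>2 / e t w \<omega>)"
              unfolding eq q_def[symmetric] by (rule a)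
          qed
        qed
        have "(\<Sum>t=1..T. h T t \<omega> powr (2 + 2) / e t w \<omega> powr (1 + 2)) \<le> (\<Sum>t=1..T. m T * ((h T t \<omega>)\<^sup>2 / e t w \<omega>))"
          using tb by (intro sum_mono) auto
        also have "\<dots> = m T * (\<Sum>t=1..T. (h T t \<omega>)\<^sup>2 / e t w \<omega>)"
          by (rule sum_distrib_left[symmetric])
        also have "\<dots> = m T" using conjunct1[OF pt] by simp
        finally show ?thesis using tb by (simp add: sum_nonneg)
      qed
      have "{\<omega>\<in>space M.
          \<bar>(\<Sum>t=1..T. h T t \<omega> powr (2 + 2) / e t w \<omega> powr (1 + 2))
            / (\<integral>\<xi>. (\<Sum>t=1..T. (h T t \<xi>)\<^sup>2 / e t w \<xi>) \<partial>M) powr (1 + 2 / 2)\<bar> > \<epsilon>} = {}"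
      proof (rule equals0I)
        fix \<omega> assume a: "\<omega> \<in> {\<omega>\<in>space M.
          \<bar>(\<Sum>t=1..T. h T t \<omega> powr (2 + 2) / e t w \<omega> powr (1 + 2))
            / (\<integral>\<xi>. (\<Sum>t=1..T. (h T t \<xi>)\<^sup>2 / e t w \<xi>) \<partial>M) powr (1 + 2 / 2)\<bar> > \<epsilon>}"
        then have \<omega>: "\<omega> \<in> space M" by simp
        have "(1::real) powr (1 + 2 / 2) = 1" by simp
        with a I1[OF T] have "\<bar>(\<Sum>t=1..T. h T t \<omega> powr (2 + 2) / e t w \<omega> powr (1 + 2))\<bar> > \<epsilon>"
          by simp
        moreover have "\<bar>(\<Sum>t=1..T. h T t \<omega> powr (2 + 2) / e t w \<omega> powr (1 + 2))\<bar> \<le> m T"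
          by (rule bnd[OF \<omega>])
        ultimately show False using mT by linarith
      qed
      then show ?case by (metis measure_empty)
    qed
  qed
  show ?thesis using part1 part2 part3 part4 by blast
qed

end
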